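(* Let $0\le a<b$, let $\alpha\in(0,1)$, and let $k:[a,b]\to\mathbb{R}$ be a continuous nonnegative map, differentiable on $[a,b]$, with $k(t)\neq 0$ and $k'(t)\neq 0$. Let $f:[a,b]\to\mathbb{R}$ be a continuous function such that $I^{\alpha}(f)$ exists. Then for all $t\in(a,b)$, $$D^{\alpha}\left[I^{\alpha}(f)\right](t)=f(t).$$
   Context: The $\alpha$-generalized fractional integral of $f$ is $I^{\alpha}(f)(t)=\int_a^t \frac{k'(x)f(x)}{(k(x))^{1-\alpha}}\,dx$ (as a possibly improper Riemann integral). For a function $F$ defined near $t\in(a,b)$ the generalized fractional derivative of order $\alpha$ is $$D^{\alpha}(F)(t):=\lim_{\varepsilon\to 0}\frac{F\left(t-k(t)+k(t)\,e^{\varepsilon\frac{(k(t))^{-\alpha}}{k'(t)}}\right)-F(t)}{\varepsilon}.$$ *)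

theory Defs
  imports "HOL-Analysis.Analysis"
begin

definition gen_frac_integrand ::
  "(real \<Rightarrow> real) \<Rightarrow> (real \<Rightarrow> real) \<Rightarrow> real \<Rightarrow> (real \<Rightarrow> real) \<Rightarrow> real \<Rightarrow> real" where
  "gen_frac_integrand k k' \<alpha> f x = k' x * f x / (k x) powr (1 - \<alpha>)"

text \<open>The alpha-generalized fractional integral I^alpha(f)(t) = int_a^t k' f / k^(1-alpha),
  taken as a (Henstock-Kurzweil) integral over [a,t]; this subsumes improper Riemann integrals.\<close>
definition gen_frac_integral ::
  "(real \<Rightarrow> real) \<Rightarrow> (real \<Rightarrow> real) \<Rightarrow> real \<Rightarrow> real \<Rightarrow> (real \<Rightarrow> real) \<Rightarrow> real \<Rightarrow> real" where
  "gen_frac_integral k k' a \<alpha> f t = integral {a..t} (gen_frac_integrand k k' \<alpha> f)"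

definition gen_frac_integral_exists ::
  "(real \<Rightarrow> real) \<Rightarrow> (real \<Rightarrow> real) \<Rightarrow> real \<Rightarrow> real \<Rightarrow> real \<Rightarrow> (real \<Rightarrow> real) \<Rightarrow> bool" where
  "gen_frac_integral_exists k k' a b \<alpha> f \<longleftrightarrow>
     (\<forall>t\<in>{a..b}. gen_frac_integrand k k' \<alpha> f integrable_on {a..t})"

definition has_gen_frac_deriv ::
  "(real \<Rightarrow> real) \<Rightarrow> (real \<Rightarrow> real) \<Rightarrow> real \<Rightarrow> (real \<Rightarrow> real) \<Rightarrow> real \<Rightarrow> real \<Rightarrow> bool" where
  "has_gen_frac_deriv k k' \<alpha> F t L \<longleftrightarrow>
     ((\<lambda>\<epsilon>. (F (t - k t + k t * exp (\<epsilon> * (k t) powr (- \<alpha>) / k' t)) - F t) / \<epsilon>)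
        \<longlongrightarrow> L) (at 0)"

end

theory Submission imports Defs begin

lemma darboux_aux:
  fixes k k' :: "real \<Rightarrow> real"
  assumes xy: "x < y" and der: "\<And>z. z \<in> {x..y} \<Longrightarrow> DERIV k z :> k' z"
    and px: "k' x > 0" and ny: "k' y < 0"
  shows "\<exists>z\<in>{x<..<y}. k' z = 0"
proof -
  have "continuous_on {x..y} k"
    using der by (meson DERIV_isCont continuous_at_imp_continuous_on)
  then obtain z where z: "z \<in> {x..y}" and zmax: "\<And>w. w \<in> {x..y} \<Longrightarrow> k w \<le> k z"
    using continuous_attains_sup[of "{x..y}" k] xy by auto
  have "z \<noteq> x"
  proof
    assume "z = x"
    obtain d where d: "d > 0" "\<And>h. h > 0 \<Longrightarrow> h < d \<Longrightarrow> k x < k (x + h)"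
      using DERIV_pos_inc_right[OF der[of x] px] xy by auto
    define h where "h = min (d/2) (y - x)"
    have "h > 0" "h < d" using d xy by (auto simp: h_def)
    then have "k x < k (x + h)" using d by auto
    moreover have "x + h \<in> {x..y}" using \<open>h > 0\<close> by (auto simp: h_def)
    ultimately show False using zmax \<open>z = x\<close> by fastforce
  qed
  have "z \<noteq> y"
  proof
    assume "z = y"
    obtain d where d: "d > 0" "\<And>h. h > 0 \<Longrightarrow> h < d \<Longrightarrow> k y < k (y - h)"
      using DERIV_neg_dec_left[OF der[of y] ny] xy by auto
    define h where "h = min (d/2) (y - x)"
    have "h > 0" "h < d" using d xy by (auto simp: h_def)
    then have "k y < k (y - h)" using d by auto
    moreover have "y - h \<in> {x..y}" using \<open>h > 0\<close> by (auto simp: h_def)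
    ultimately show False using zmax \<open>z = y\<close> by fastforce
  qed
  with \<open>z \<noteq> x\<close> z have zi: "z \<in> {x<..<y}" by auto
  have "k' z = 0"
  proof (rule DERIV_local_max[OF der[of z]])
    show "z \<in> {x..y}" using zi by auto
    show "0 < min (z - x) (y - z)" using zi by auto
    show "\<forall>w. \<bar>z - w\<bar> < min (z - x) (y - z) \<longrightarrow> k w \<le> k z"
      using zmax by (auto simp: abs_if)
  qed
  then show ?thesis using zi by auto
qed

lemma darboux_sign:
  fixes k k' :: "real \<Rightarrow> real"
  assumes der: "\<And>z. z \<in> {c<..<d} \<Longrightarrow> DERIV k z :> k' z"
    and nz: "\<And>z. z \<in> {c<..<d} \<Longrightarrow> k' z \<noteq> 0"
    and x: "x \<in> {c<..<d}" and y: "y \<in> {c<..<d}" and px: "k' x > 0"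
  shows "k' y > 0"
proof (rule ccontr)
  assume "\<not> k' y > 0"
  with nz[OF y] have ny: "k' y < 0" by auto
  show False
  proof (cases "x < y")
    case True
    then obtain z where "z \<in> {x<..<y}" "k' z = 0"
      using darboux_aux[of x y k k'] der x y px ny by fastforce
    then show False using nz x y by auto
  next
    case False
    with px ny have "y < x" by (cases "x = y") auto
    have d2: "\<And>z. z \<in> {y..x} \<Longrightarrow> DERIV (\<lambda>w. - k w) z :> - k' z"
      using der x y by (auto intro!: DERIV_minus)
    obtain z where "z \<in> {y<..<x}" "- k' z = 0"
      using darboux_aux[of y x "\<lambda>w. - k w" "\<lambda>w. - k' w", OF \<open>y < x\<close> d2] px ny by auto
    then show False using nz x y by auto
  qed
qed

lemma abs_integral_bound:
  fixes \<phi> \<psi> :: "real \<Rightarrow> real"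
  assumes "(\<phi> has_integral P) S" "(\<psi> has_integral Q) S" "\<And>x. x \<in> S \<Longrightarrow> \<bar>\<phi> x\<bar> \<le> \<psi> x"
  shows "\<bar>P\<bar> \<le> Q"
proof -
  have "P \<le> Q" by (rule has_integral_le[OF assms(1,2)]) (use assms(3) in fastforce)
  moreover have "-P \<le> Q"
    by (rule has_integral_le[OF has_integral_neg[OF assms(1)] assms(2)]) (use assms(3) in fastforce)
  ultimately show ?thesis by linarith
qed

theorem mainTheorem6:
  fixes a b \<alpha> :: real and k k' f :: "real \<Rightarrow> real"
  assumes "0 \<le> a" and "a < b"
    and "0 < \<alpha>" and "\<alpha> < 1"
    and "continuous_on {a..b} k"
    and "\<And>x. x \<in> {a..b} \<Longrightarrow> 0 \<le> k x"
    and "\<And>x. x \<in> {a..b} \<Longrightarrow> (k has_real_derivative k' x) (at x within {a..b})"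
    and "\<And>x. x \<in> {a<..<b} \<Longrightarrow> k x \<noteq> 0"
    and "\<And>x. x \<in> {a<..<b} \<Longrightarrow> k' x \<noteq> 0"
    and "continuous_on {a..b} f"
    and "gen_frac_integral_exists k k' a b \<alpha> f"
    and "t \<in> {a<..<b}"
  shows "has_gen_frac_deriv k k' \<alpha> (gen_frac_integral k k' a \<alpha> f) t (f t)"
proof -
  let ?I = "{a<..<b}"
  have kpos: "k x > 0" if "x \<in> ?I" for x
    using assms(6)[of x] assms(8)[OF that] that by auto
  have dk: "DERIV k x :> k' x" if "x \<in> ?I" for x
  proof -
    have "(k has_real_derivative k' x) (at x within ?I)"
      by (rule has_field_derivative_subset[OF assms(7)[of x]]) (use that in auto)
    then show ?thesis using at_within_open[of x ?I] that by auto
  qed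
  define w where "w x = k' x / k x powr (1 - \<alpha>)" for x
  define h where "h x = k x powr \<alpha> / \<alpha>" for x
  have dh: "DERIV h x :> w x" if "x \<in> ?I" for x
  proof -
    have "DERIV h x :> (\<alpha> * k x powr (\<alpha> - 1) * k' x) / \<alpha>"
      unfolding h_def using dk[OF that] kpos[OF that]
      by (auto intro!: derivative_eq_intros)
    moreover have "(\<alpha> * k x powr (\<alpha> - 1) * k' x) / \<alpha> = w x"
    proof -
      have "k x powr (\<alpha> - 1) = 1 / k x powr (1 - \<alpha>)"
        using powr_minus_divide[of "k x" "1 - \<alpha>"] by simp
      then show ?thesis using assms(3) by (simp add: w_def)
    qed
    ultimately show ?thesis by simp
  qed
  define g where "g = gen_frac_integrand k k' \<alpha> f"
  have gw: "g x = w x * f x" for x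
    by (simp add: g_def gen_frac_integrand_def w_def)
  have sgn: "(\<forall>x\<in>?I. k' x > 0) \<or> (\<forall>x\<in>?I. k' x < 0)"
  proof (cases "k' t > 0")
    case True
    then show ?thesis using darboux_sign[of a b k k' t] dk assms(9,12) by blast
  next
    case False
    then have "k' t < 0" using assms(9,12) by (meson linorder_neqE_linordered_idom)
    have "k' x < 0" if x: "x \<in> ?I" for x
    proof (rule ccontr)
      assume "\<not> k' x < 0"
      then have "k' x > 0" using assms(9)[OF x] by auto
      then have "k' t > 0" using darboux_sign[of a b k k' x t] dk assms(9,12) x by blast
      then show False using \<open>k' t < 0\<close> by simp
    qed
    then show ?thesis by blast
  qed
  define \<sigma> where "\<sigma> = (if \<forall>x\<in>?I. k' x > 0 then 1 else -1 :: real)"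
  have absw: "\<bar>w x\<bar> = \<sigma> * w x" if "x \<in> ?I" for x
  proof -
    have "k x powr (1 - \<alpha>) > 0" using kpos[OF that] by simp
    show ?thesis
    proof (cases "\<forall>x\<in>?I. k' x > 0")
      case True
      then have "k' x > 0" using that by auto
      then show ?thesis using True \<open>k x powr (1 - \<alpha>) > 0\<close> by (simp add: \<sigma>_def w_def)
    next
      case False
      then have "k' x < 0" using that sgn by auto
      then show ?thesis using False \<open>k x powr (1 - \<alpha>) > 0\<close>
        by (simp add: \<sigma>_def w_def abs_if divide_less_0_iff)
    qed
  qed
  have \<sigma>: "\<sigma> = 1 \<or> \<sigma> = -1" by (simp add: \<sigma>_def)
  define F where "F = gen_frac_integral k k' a \<alpha> f"
  have Fg: "F x = integral {a..x} g" for x by (simp add: F_def g_def gen_frac_integral_def)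
  define G where "G s = F s - f t * h s" for s
  have key: "\<bar>G v - G u\<bar> \<le> \<eta> * \<bar>h v - h u\<bar>"
    if uv: "u \<in> ?I" "v \<in> ?I" "u \<le> v" and eta: "\<And>x. x \<in> {u..v} \<Longrightarrow> \<bar>f x - f t\<bar> \<le> \<eta>" for u v \<eta>
  proof -
    have sub: "{u..v} \<subseteq> ?I" using uv by auto
    have hw: "(w has_integral (h v - h u)) {u..v}"
    proof (rule fundamental_theorem_of_calculus[OF uv(3)])
      fix x assume "x \<in> {u..v}"
      then have "DERIV h x :> w x" using dh sub by auto
      then show "(h has_vector_derivative w x) (at x within {u..v})"
        by (simp add: has_real_derivative_iff_has_vector_derivative has_vector_derivative_at_within)
    qed
    have gi: "g integrable_on {a..v}" using assms(11) uv unfolding gen_frac_integral_exists_def g_def by auto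
    have "integral {a..u} g + integral {u..v} g = integral {a..v} g"
      using Henstock_Kurzweil_Integration.integral_combine[where f=g and a=a and c=u and b=v] gi uv by auto
    moreover have "g integrable_on {u..v}"
      using integrable_subinterval_real[OF gi] uv by auto
    ultimately have gI: "(g has_integral (F v - F u)) {u..v}"
      by (metis Fg add_diff_cancel_left' integrable_integral)
    have d: "((\<lambda>x. g x - f t * w x) has_integral (G v - G u)) {u..v}"
      using has_integral_diff[OF gI has_integral_mult_right[OF hw, of "f t"]]
      by (simp add: G_def algebra_simps)
    have ab: "((\<lambda>x. \<eta> * (\<sigma> * w x)) has_integral (\<eta> * (\<sigma> * (h v - h u)))) {u..v}"
      by (intro has_integral_mult_right hw)
    have "\<bar>G v - G u\<bar> \<le> \<eta> * (\<sigma> * (h v - h u))"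
    proof (rule abs_integral_bound[OF d ab])
      fix x assume x: "x \<in> {u..v}"
      have "\<bar>g x - f t * w x\<bar> = \<bar>f x - f t\<bar> * \<bar>w x\<bar>"
      proof -
        have "g x - f t * w x = (f x - f t) * w x" by (simp add: gw algebra_simps)
        then show ?thesis by (simp add: abs_mult)
      qed
      also have "\<dots> \<le> \<eta> * \<bar>w x\<bar>" using eta[OF x] by (simp add: mult_right_mono)
      finally show "\<bar>g x - f t * w x\<bar> \<le> \<eta> * (\<sigma> * w x)" using absw x sub by auto
    qed
    moreover have "0 \<le> \<sigma> * (h v - h u)"
      by (rule has_integral_nonneg[OF has_integral_mult_right[OF hw, of \<sigma>]]) (metis absw abs_ge_zero atLeastAtMost_iff sub subsetD)
    then have "\<sigma> * (h v - h u) = \<bar>h v - h u\<bar>" using \<sigma> by auto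
    ultimately show ?thesis by simp
  qed
  have dG: "DERIV G t :> 0"
    unfolding has_field_derivative_iff
  proof (rule LIM_I)
    fix r :: real assume r: "r > 0"
    obtain d2 where d2: "d2 > 0" "\<And>y. y \<noteq> t \<and> norm (y - t) < d2 \<Longrightarrow> norm ((h y - h t) / (y - t) - w t) < 1"
      using LIM_D[OF dh[OF assms(12), unfolded has_field_derivative_iff], of 1] by auto
    define \<eta> where "\<eta> = r / (2 * (\<bar>w t\<bar> + 1))"
    have \<eta>: "\<eta> > 0" using r by (simp add: \<eta>_def add_pos_nonneg)
    have "isCont f t"
      using continuous_on_interior[OF assms(10), of t] assms(12) interior_atLeastAtMost_real by auto
    then obtain d1 where d1: "d1 > 0" "\<And>y. y \<noteq> t \<and> norm (y - t) < d1 \<Longrightarrow> norm (f y - f t) < \<eta>"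
      using LIM_D[OF isContD[OF \<open>isCont f t\<close>] \<eta>] by auto
    define d where "d = min d1 (min d2 (min (t - a) (b - t)))"
    have dpos: "d > 0" using d1 d2 assms(12) by (simp add: d_def)
    show "\<exists>s>0. \<forall>y. y \<noteq> t \<and> norm (y - t) < s \<longrightarrow> norm ((G y - G t) / (y - t) - 0) < r"
    proof (intro exI conjI allI impI)
      show "d > 0" by (rule dpos)
      fix y assume y: "y \<noteq> t \<and> norm (y - t) < d"
      have yI: "y \<in> ?I" using y by (auto simp: d_def)
      have fb: "\<bar>f x - f t\<bar> \<le> \<eta>" if "\<bar>x - t\<bar> \<le> \<bar>y - t\<bar>" for x
      proof (cases "x = t")
        case True then show ?thesis using \<eta> by simp
      next
        case False
        then show ?thesis using d1(2)[of x] that y by (auto simp: d_def)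
      qed
      have hb: "\<bar>h y - h t\<bar> \<le> (\<bar>w t\<bar> + 1) * \<bar>y - t\<bar>"
      proof -
        have "\<bar>(h y - h t) / (y - t) - w t\<bar> < 1" using d2(2)[of y] y by (auto simp: d_def)
        then have "\<bar>(h y - h t) / (y - t)\<bar> \<le> \<bar>w t\<bar> + 1" by linarith
        then show ?thesis using y by (simp add: abs_divide divide_le_eq)
      qed
      have "\<bar>G y - G t\<bar> \<le> \<eta> * \<bar>h y - h t\<bar>"
      proof (cases "t < y")
        case True
        show ?thesis using key[of t y \<eta>] True yI assms(12) fb by auto
      next
        case False
        then have "y < t" using y by auto
        then show ?thesis using key[of y t \<eta>] yI assms(12) fb by (auto simp: abs_minus_commute)
      qed
      also have "\<dots> \<le> \<eta> * ((\<bar>w t\<bar> + 1) * \<bar>y - t\<bar>)" using hb \<eta> by (simp add: mult_left_mono)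
      also have "\<dots> = r / 2 * \<bar>y - t\<bar>" unfolding \<eta>_def by (simp add: field_simps)
      also have "\<dots> < r * \<bar>y - t\<bar>" using r y by simp
      finally show "norm ((G y - G t) / (y - t) - 0) < r"
        using y by (simp add: abs_divide divide_less_eq)
    qed
  qed
  have dF: "DERIV F t :> g t"
  proof -
    have "DERIV (\<lambda>y. G y + f t * h y) t :> 0 + f t * w t"
      by (intro DERIV_add dG DERIV_cmult dh assms(12))
    moreover have "(\<lambda>y. G y + f t * h y) = F" by (auto simp: G_def)
    ultimately show ?thesis by (simp add: gw mult.commute)
  qed
  define c where "c = k t powr (- \<alpha>) / k' t"
  define u where "u \<epsilon> = t - k t + k t * exp (\<epsilon> * k t powr (- \<alpha>) / k' t)" for \<epsilon>
  have du: "DERIV u 0 :> k t * c"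
    unfolding u_def c_def using assms(9)[OF assms(12)] by (auto intro!: derivative_eq_intros)
  have u0: "u 0 = t" by (simp add: u_def)
  have dFu: "DERIV (F \<circ> u) 0 :> g t * (k t * c)"
    using DERIV_chain[OF _ du] dF u0 by simp
  have val: "g t * (k t * c) = f t"
  proof -
    have kt: "k t > 0" using kpos assms(12) by auto
    have "k t powr (1 - \<alpha>) = k t * k t powr (- \<alpha>)"
      using powr_add[of "k t" 1 "- \<alpha>"] kt by simp
    then show ?thesis using kt assms(9)[OF assms(12)]
      by (simp add: gw w_def c_def field_simps)
  qed
  show ?thesis
    using dFu[unfolded DERIV_def] val u0
    unfolding has_gen_frac_deriv_def F_def[symmetric]
    by (simp add: u_def o_def)
qed

end
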